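(* Let $(\mathcal C,\otimes,\mathbb I)$ be a monoidal category with pushouts and $(H,\Delta,\varepsilon)$ a coalgebra in $\mathcal C$. The induction functor $\mathsf{Ind}:\mathsf{Cov}^H\to\mathsf{PCom}^H$ restricts to a faithful functor $\mathsf{Ind}:\mathsf{Cov}^H_{pr}\to\mathsf{PCom}^H$, where $\mathsf{Cov}^H_{pr}$ is the full subcategory of proper covers.
   Context: $\mathcal C$ is treated as strict monoidal; the identity of an object $X$ is also written $X$. $\mathsf{Com}^H$ is the category of right $H$-comodules $(Y,\delta)$. A partial comodule datum is $(X,X\bullet H,\pi_X,\rho_X)$ with $\rho_X:X\to X\bullet H$ and $\pi_X:X\otimes H\to X\bullet H$ an epimorphism. For such a datum let: $(X\bullet H)\bullet H$ be the pushout of $\pi_X$ and $\rho_X\otimes H$, with coprojections $\rho_X\bullet H$ and $\pi_{X\bullet H}$; $X\bullet(H\otimes H)$ the pushout of $\pi_X$ and $X\otimes\Delta$, with coprojections $X\bullet\Delta$ and $\pi_{X,\Delta}$; $X\bullet(H\bullet H)$ the pushout of $\pi_{X,\Delta}$ and $\pi_X\otimes H$, with coprojections $\pi'_X$ and $\pi'_{X,\Delta}$. A geometric partial $H$-comodule is a datum such that (GP1) there is $X\bullet\varepsilon:X\bullet H\to X$ with $(X\bullet\varepsilon)\circ\rho_X=\mathrm{id}_X$ and $(X\bullet\varepsilon)\circ\pi_X=X\otimes\varepsilon$; (GP2) there is an isomorphism $\theta:X\bullet(H\bullet H)\to(X\bullet H)\bullet H$ with $\theta\circ\pi'_{X,\Delta}=\pi_{X\bullet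 H}$ and $(\rho_X\bullet H)\circ\rho_X=\theta\circ\pi'_X\circ(X\bullet\Delta)\circ\rho_X$. Morphisms $X\to X'$ are pairs $(f,f\bullet H)$ with $\rho_{X'}\circ f=(f\bullet H)\circ\rho_X$ and $\pi_{X'}\circ(f\otimes H)=(f\bullet H)\circ\pi_X$; category $\mathsf{PCom}^H$. $\mathsf{Cov}^H$ has objects $(Y,X,p)$ with $(Y,\delta_Y)\in\mathsf{Com}^H$, $X\in\mathcal C$, $p:Y\to X$ an epimorphism in $\mathcal C$; morphisms $(F,f):(Y,X,p)\to(Y',X',p')$ consist of a comodule morphism $F$ and a morphism $f$ in $\mathcal C$ with $p'\circ F=f\circ p$. The functor $\mathsf{Ind}$ sends $(Y,X,p)$ to $(X,X\bullet H,\pi_X,\rho_X)$ where $X\bullet H$ with coprojections $\rho_X,\pi_X$ is the pushout of $p$ and $(p\otimes H)\circ\delta_Y$ (a geometric partial comodule), and sends $(F,f)$ to $(f,f\bullet H)$, $f\bullet H$ being the morphism induced by the pushout property. A cover $(Y,X,p)$ is proper if $(p\otimes H)\circ\delta_Y:Y\to X\otimes H$ is a monomorphism in $\mathsf{Com}^H$, where $X\otimes H$ carries the coaction $X\otimes\Delta$. *)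

theory Defs
  imports Main
begin

text \<open>A (small, possibly large-as-a-type) strict monoidal category, given by its data.
  Cmp g f is the composite g after f.  The identity of an object X is Idt X.\<close>

record ('o,'m) smcat =
  Obj  :: "'o set"
  Arr  :: "'m set"
  Dom  :: "'m \<Rightarrow> 'o"
  Cod  :: "'m \<Rightarrow> 'o"
  Cmp  :: "'m \<Rightarrow> 'm \<Rightarrow> 'm"
  Idt  :: "'o \<Rightarrow> 'm"
  TenO :: "'o \<Rightarrow> 'o \<Rightarrow> 'o"
  TenA :: "'m \<Rightarrow> 'm \<Rightarrow> 'm"
  Unit :: "'o"

definition hom :: "('o,'m) smcat \<Rightarrow> 'm \<Rightarrow> 'o \<Rightarrow> 'o \<Rightarrow> bool" where
  "hom C f a b \<longleftrightarrow> f \<in> Arr C \<and> Dom C f = a \<and> Cod C f = b"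

definition is_category :: "('o,'m) smcat \<Rightarrow> bool" where
  "is_category C \<longleftrightarrow>
     (\<forall>f\<in>Arr C. Dom C f \<in> Obj C \<and> Cod C f \<in> Obj C) \<and>
     (\<forall>a\<in>Obj C. hom C (Idt C a) a a) \<and>
     (\<forall>f g a b c. hom C f a b \<longrightarrow> hom C g b c \<longrightarrow> hom C (Cmp C g f) a c) \<and>
     (\<forall>f g h. f \<in> Arr C \<longrightarrow> g \<in> Arr C \<longrightarrow> h \<in> Arr C \<longrightarrow>
        Cod C f = Dom C g \<longrightarrow> Cod C g = Dom C h \<longrightarrow>
        Cmp C h (Cmp C g f) = Cmp C (Cmp C h g) f) \<and>
     (\<forall>f\<in>Arr C. Cmp C (Idt C (Cod C f)) f = f \<and> Cmp C f (Idt C (Dom C f)) = f)"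

definition strict_monoidal_category :: "('o,'m) smcat \<Rightarrow> bool" where
  "strict_monoidal_category C \<longleftrightarrow> is_category C \<and>
     Unit C \<in> Obj C \<and>
     (\<forall>a\<in>Obj C. \<forall>b\<in>Obj C. TenO C a b \<in> Obj C) \<and>
     (\<forall>f\<in>Arr C. \<forall>g\<in>Arr C. hom C (TenA C f g) (TenO C (Dom C f) (Dom C g))
                                            (TenO C (Cod C f) (Cod C g))) \<and>
     (\<forall>a\<in>Obj C. \<forall>b\<in>Obj C. TenA C (Idt C a) (Idt C b) = Idt C (TenO C a b)) \<and>
     (\<forall>f g f' g'. f \<in> Arr C \<longrightarrow> g \<in> Arr C \<longrightarrow> f' \<in> Arr C \<longrightarrow> g' \<in> Arr C \<longrightarrow>
        Cod C f = Dom C g \<longrightarrow> Cod C f' = Dom C g' \<longrightarrow>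
        TenA C (Cmp C g f) (Cmp C g' f') = Cmp C (TenA C g g') (TenA C f f')) \<and>
     (\<forall>a\<in>Obj C. \<forall>b\<in>Obj C. \<forall>c\<in>Obj C. TenO C (TenO C a b) c = TenO C a (TenO C b c)) \<and>
     (\<forall>f\<in>Arr C. \<forall>g\<in>Arr C. \<forall>h\<in>Arr C. TenA C (TenA C f g) h = TenA C f (TenA C g h)) \<and>
     (\<forall>a\<in>Obj C. TenO C (Unit C) a = a \<and> TenO C a (Unit C) = a) \<and>
     (\<forall>f\<in>Arr C. TenA C (Idt C (Unit C)) f = f \<and> TenA C f (Idt C (Unit C)) = f)"

definition epi :: "('o,'m) smcat \<Rightarrow> 'm \<Rightarrow> bool" where
  "epi C e \<longleftrightarrow> e \<in> Arr C \<and>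
     (\<forall>u v. u \<in> Arr C \<longrightarrow> v \<in> Arr C \<longrightarrow> Dom C u = Cod C e \<longrightarrow> Dom C v = Cod C e \<longrightarrow>
        Cod C u = Cod C v \<longrightarrow> Cmp C u e = Cmp C v e \<longrightarrow> u = v)"

definition is_pushout :: "('o,'m) smcat \<Rightarrow> 'm \<Rightarrow> 'm \<Rightarrow> 'o \<Rightarrow> 'm \<Rightarrow> 'm \<Rightarrow> bool" where
  "is_pushout C f g P i j \<longleftrightarrow>
     f \<in> Arr C \<and> g \<in> Arr C \<and> Dom C f = Dom C g \<and>
     hom C i (Cod C f) P \<and> hom C j (Cod C g) P \<and> Cmp C i f = Cmp C j g \<and>
     (\<forall>Q k l. hom C k (Cod C f) Q \<longrightarrow> hom C l (Cod C g) Q \<longrightarrow> Cmp C k f = Cmp C l g \<longrightarrow>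
        (\<exists>!u. hom C u P Q \<and> Cmp C u i = k \<and> Cmp C u j = l))"

definition has_pushouts :: "('o,'m) smcat \<Rightarrow> bool" where
  "has_pushouts C \<longleftrightarrow>
     (\<forall>f g. f \<in> Arr C \<longrightarrow> g \<in> Arr C \<longrightarrow> Dom C f = Dom C g \<longrightarrow>
        (\<exists>P i j. is_pushout C f g P i j))"

definition coalgebra :: "('o,'m) smcat \<Rightarrow> 'o \<Rightarrow> 'm \<Rightarrow> 'm \<Rightarrow> bool" where
  "coalgebra C H \<Delta> \<epsilon> \<longleftrightarrow> H \<in> Obj C \<and>
     hom C \<Delta> H (TenO C H H) \<and> hom C \<epsilon> H (Unit C) \<and>
     Cmp C (TenA C \<Delta> (Idt C H)) \<Delta> = Cmp C (TenA C (Idt C H) \<Delta>) \<Delta> \<and>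
     Cmp C (TenA C \<epsilon> (Idt C H)) \<Delta> = Idt C H \<and>
     Cmp C (TenA C (Idt C H) \<epsilon>) \<Delta> = Idt C H"

definition comodule :: "('o,'m) smcat \<Rightarrow> 'o \<Rightarrow> 'm \<Rightarrow> 'm \<Rightarrow> 'o \<Rightarrow> 'm \<Rightarrow> bool" where
  "comodule C H \<Delta> \<epsilon> Y \<delta> \<longleftrightarrow> Y \<in> Obj C \<and> hom C \<delta> Y (TenO C Y H) \<and>
     Cmp C (TenA C \<delta> (Idt C H)) \<delta> = Cmp C (TenA C (Idt C Y) \<Delta>) \<delta> \<and>
     Cmp C (TenA C (Idt C Y) \<epsilon>) \<delta> = Idt C Y"

definition comodule_hom ::
  "('o,'m) smcat \<Rightarrow> 'o \<Rightarrow> 'o \<Rightarrow> 'm \<Rightarrow> 'o \<Rightarrow> 'm \<Rightarrow> 'm \<Rightarrow> bool" where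
  "comodule_hom C H Y \<delta> Y' \<delta>' F \<longleftrightarrow> hom C F Y Y' \<and>
     Cmp C \<delta>' F = Cmp C (TenA C F (Idt C H)) \<delta>"

definition comodule_mono ::
  "('o,'m) smcat \<Rightarrow> 'o \<Rightarrow> 'm \<Rightarrow> 'm \<Rightarrow> 'o \<Rightarrow> 'm \<Rightarrow> 'o \<Rightarrow> 'm \<Rightarrow> 'm \<Rightarrow> bool" where
  "comodule_mono C H \<Delta> \<epsilon> Y \<delta> Z \<delta>Z m \<longleftrightarrow> comodule_hom C H Y \<delta> Z \<delta>Z m \<and>
     (\<forall>W \<delta>W a b. comodule C H \<Delta> \<epsilon> W \<delta>W \<longrightarrow>
        comodule_hom C H W \<delta>W Y \<delta> a \<longrightarrow> comodule_hom C H W \<delta>W Y \<delta> b \<longrightarrow>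
        Cmp C m a = Cmp C m b \<longrightarrow> a = b)"

definition cover :: "('o,'m) smcat \<Rightarrow> 'o \<Rightarrow> 'm \<Rightarrow> 'm \<Rightarrow> 'o \<Rightarrow> 'm \<Rightarrow> 'o \<Rightarrow> 'm \<Rightarrow> bool" where
  "cover C H \<Delta> \<epsilon> Y \<delta> X p \<longleftrightarrow> comodule C H \<Delta> \<epsilon> Y \<delta> \<and> X \<in> Obj C \<and> hom C p Y X \<and> epi C p"

definition proper_cover ::
  "('o,'m) smcat \<Rightarrow> 'o \<Rightarrow> 'm \<Rightarrow> 'm \<Rightarrow> 'o \<Rightarrow> 'm \<Rightarrow> 'o \<Rightarrow> 'm \<Rightarrow> bool" where
  "proper_cover C H \<Delta> \<epsilon> Y \<delta> X p \<longleftrightarrow> cover C H \<Delta> \<epsilon> Y \<delta> X p \<and>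
     comodule_mono C H \<Delta> \<epsilon> Y \<delta> (TenO C X H) (TenA C (Idt C X) \<Delta>)
       (Cmp C (TenA C p (Idt C H)) \<delta>)"

definition cover_hom ::
  "('o,'m) smcat \<Rightarrow> 'o \<Rightarrow> 'o \<Rightarrow> 'm \<Rightarrow> 'o \<Rightarrow> 'm \<Rightarrow> 'o \<Rightarrow> 'm \<Rightarrow> 'o \<Rightarrow> 'm \<Rightarrow> 'm \<Rightarrow> 'm \<Rightarrow> bool" where
  "cover_hom C H Y \<delta> X p Y' \<delta>' X' p' F f \<longleftrightarrow>
     comodule_hom C H Y \<delta> Y' \<delta>' F \<and> hom C f X X' \<and> Cmp C p' F = Cmp C f p"

text \<open>Object part of Ind: (XH, \<rho>, \<pi>) is a pushout of p and (p \<otimes> H) \<circ> \<delta>, with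
  \<rho> : X \<rightarrow> XH and \<pi> : X \<otimes> H \<rightarrow> XH (any choice of pushout).\<close>
definition ind_obj ::
  "('o,'m) smcat \<Rightarrow> 'o \<Rightarrow> 'm \<Rightarrow> 'm \<Rightarrow> 'o \<Rightarrow> 'm \<Rightarrow> 'o \<Rightarrow> 'm \<Rightarrow> 'o \<Rightarrow> 'm \<Rightarrow> 'm \<Rightarrow> bool" where
  "ind_obj C H \<Delta> \<epsilon> Y \<delta> X p XH \<rho> \<pi> \<longleftrightarrow>
     is_pushout C p (Cmp C (TenA C p (Idt C H)) \<delta>) XH \<rho> \<pi>"

text \<open>Morphism part of Ind: Ind(F,f) = (f, fH), where fH : XH \<rightarrow> XH' is the morphism
  induced by the pushout property, i.e. the (unique) morphism with
  fH \<circ> \<rho> = \<rho>' \<circ> f and fH \<circ> \<pi> = \<pi>' \<circ> (f \<otimes> H).\<close>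
definition ind_hom ::
  "('o,'m) smcat \<Rightarrow> 'o \<Rightarrow> 'o \<Rightarrow> 'm \<Rightarrow> 'm \<Rightarrow> 'o \<Rightarrow> 'm \<Rightarrow> 'm \<Rightarrow> 'm \<Rightarrow> 'm \<Rightarrow> bool" where
  "ind_hom C H XH \<rho> \<pi> XH' \<rho>' \<pi>' f fH \<longleftrightarrow>
     hom C fH XH XH' \<and> Cmp C fH \<rho> = Cmp C \<rho>' f \<and>
     Cmp C fH \<pi> = Cmp C \<pi>' (TenA C f (Idt C H))"

end

theory Submission
  imports Defs
begin

lemma key:
  assumes sm: "strict_monoidal_category C" and H: "H \<in> Obj C"
    and dh: "hom C \<delta> Y (TenO C Y H)" and dh': "hom C \<delta>' Y' (TenO C Y' H)"
    and pp: "hom C p' Y' X'" and p: "hom C p Y X" and ff: "hom C f X X'"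
    and Fh: "comodule_hom C H Y \<delta> Y' \<delta>' F"
    and com: "Cmp C p' F = Cmp C f p"
  shows "Cmp C (Cmp C (TenA C p' (Idt C H)) \<delta>') F = Cmp C (TenA C (Cmp C f p) (Idt C H)) \<delta>"
proof -
  have cat: "is_category C" using sm unfolding strict_monoidal_category_def by blast
  have iH: "hom C (Idt C H) H H" using cat H unfolding is_category_def by blast
  have FF: "hom C F Y Y'" and Fc: "Cmp C \<delta>' F = Cmp C (TenA C F (Idt C H)) \<delta>"
    using Fh unfolding comodule_hom_def by auto
  have tenh: "\<And>a b. a \<in> Arr C \<Longrightarrow> b \<in> Arr C \<Longrightarrow> hom C (TenA C a b) (TenO C (Dom C a) (Dom C b)) (TenO C (Cod C a) (Cod C b))"
    using sm unfolding strict_monoidal_category_def by blast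
  have fun2: "TenA C (Cmp C g f) (Cmp C g' f') = Cmp C (TenA C g g') (TenA C f f')"
    if "f \<in> Arr C" "g \<in> Arr C" "f' \<in> Arr C" "g' \<in> Arr C" "Cod C f = Dom C g" "Cod C f' = Dom C g'" for f g f' g'
    using sm that unfolding strict_monoidal_category_def by blast
  have assoc: "Cmp C h (Cmp C g f) = Cmp C (Cmp C h g) f"
    if "f \<in> Arr C" "g \<in> Arr C" "h \<in> Arr C" "Cod C f = Dom C g" "Cod C g = Dom C h" for f g h
    using cat that unfolding is_category_def by blast
  have idl: "Cmp C (Idt C H) (Idt C H) = Idt C H"
    using cat iH unfolding is_category_def hom_def by metis
  have tp: "hom C (TenA C p' (Idt C H)) (TenO C Y' H) (TenO C X' H)"
    using tenh[of p' "Idt C H"] pp iH unfolding hom_def by auto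
  have tF: "hom C (TenA C F (Idt C H)) (TenO C Y H) (TenO C Y' H)"
    using tenh[of F "Idt C H"] FF iH unfolding hom_def by auto
  have "Cmp C (Cmp C (TenA C p' (Idt C H)) \<delta>') F = Cmp C (TenA C p' (Idt C H)) (Cmp C \<delta>' F)"
    using assoc[of F \<delta>' "TenA C p' (Idt C H)"] FF dh' tp unfolding hom_def by auto
  also have "\<dots> = Cmp C (TenA C p' (Idt C H)) (Cmp C (TenA C F (Idt C H)) \<delta>)" using Fc by simp
  also have "\<dots> = Cmp C (Cmp C (TenA C p' (Idt C H)) (TenA C F (Idt C H))) \<delta>"
    using assoc[of \<delta> "TenA C F (Idt C H)" "TenA C p' (Idt C H)"] dh tF tp unfolding hom_def by auto
  also have "Cmp C (TenA C p' (Idt C H)) (TenA C F (Idt C H)) = TenA C (Cmp C p' F) (Cmp C (Idt C H) (Idt C H))"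
    using fun2[of F p' "Idt C H" "Idt C H"] FF pp iH unfolding hom_def by auto
  finally show ?thesis using com idl by simp
qed

theorem corollary2p13:
  assumes "strict_monoidal_category C" and "has_pushouts C"
    and "coalgebra C H \<Delta> \<epsilon>"
    and "proper_cover C H \<Delta> \<epsilon> Y \<delta> X p"
    and "proper_cover C H \<Delta> \<epsilon> Y' \<delta>' X' p'"
    and "ind_obj C H \<Delta> \<epsilon> Y \<delta> X p XH \<rho> \<pi>"
    and "ind_obj C H \<Delta> \<epsilon> Y' \<delta>' X' p' XH' \<rho>' \<pi>'"
    and "cover_hom C H Y \<delta> X p Y' \<delta>' X' p' F f"
    and "cover_hom C H Y \<delta> X p Y' \<delta>' X' p' G g"
    and "ind_hom C H XH \<rho> \<pi> XH' \<rho>' \<pi>' f fH"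
    and "ind_hom C H XH \<rho> \<pi> XH' \<rho>' \<pi>' g gH"
    and "(f, fH) = (g, gH)"
  shows "(F, f) = (G, g)"
proof -
  have fg: "f = g" using assms(12) by simp
  have H: "H \<in> Obj C" using assms(3) unfolding coalgebra_def by blast
  have c1: "comodule C H \<Delta> \<epsilon> Y \<delta>" "hom C p Y X"
    using assms(4) unfolding proper_cover_def cover_def by auto
  have c2: "comodule C H \<Delta> \<epsilon> Y' \<delta>'" "hom C p' Y' X'"
    and mono: "comodule_mono C H \<Delta> \<epsilon> Y' \<delta>' (TenO C X' H) (TenA C (Idt C X') \<Delta>)
       (Cmp C (TenA C p' (Idt C H)) \<delta>')"
    using assms(5) unfolding proper_cover_def cover_def by auto
  have dh: "hom C \<delta> Y (TenO C Y H)" using c1 unfolding comodule_def by blast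
  have dh': "hom C \<delta>' Y' (TenO C Y' H)" using c2 unfolding comodule_def by blast
  have F: "comodule_hom C H Y \<delta> Y' \<delta>' F" "hom C f X X'" "Cmp C p' F = Cmp C f p"
    using assms(8) unfolding cover_hom_def by auto
  have G: "comodule_hom C H Y \<delta> Y' \<delta>' G" "hom C g X X'" "Cmp C p' G = Cmp C g p"
    using assms(9) unfolding cover_hom_def by auto
  have e1: "Cmp C (Cmp C (TenA C p' (Idt C H)) \<delta>') F = Cmp C (TenA C (Cmp C f p) (Idt C H)) \<delta>"
    by (rule key[OF assms(1) H dh dh' c2(2) c1(2) F(2) F(1) F(3)])
  have e2: "Cmp C (Cmp C (TenA C p' (Idt C H)) \<delta>') G = Cmp C (TenA C (Cmp C g p) (Idt C H)) \<delta>"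
    by (rule key[OF assms(1) H dh dh' c2(2) c1(2) G(2) G(1) G(3)])
  have "F = G" using mono c1(1) F(1) G(1) e1 e2 fg unfolding comodule_mono_def by metis
  then show ?thesis using fg by simp
qed

end
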